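(* Let $U$ be a compact metric space, $X\subset\mathbb R^N$ compact, $T:U\to U$ surjective, and $g:U\times X\to X$ a continuous driven system that is SI-invertible and has the unique solution property. Let $H_2:\widehat U_T\to Y_T\subset\mathbb R^N\times\mathbb R^N$, $H_2(\overleftarrow u)=(h(r\overleftarrow u),h(\overleftarrow u))$, and for $i=1,\ldots,N$ let $\pi_i:\mathbb R^N\times\mathbb R^N\to\mathbb R^2$, $\pi_i(y,z)=(y^i,z^i)$, and $f_i:=\pi_i\circ H_2:\widehat U_T\to\mathbb R^2$. Let $\mathcal K$ be the Koopman operator of $\widehat T$, i.e. $\mathcal K f=f\circ\widehat T$. Then for each $i=1,\ldots,N$, $$\mathcal K f_i=\pi_i\circ G_T\circ H_2 .$$
   Context: An orbit of $T$ is a bi-infinite sequence $\{u_n\}$ with $u_{n+1}=Tu_n$. A solution of $g$ for an input $\{u_n\}_{n\in\mathbb Z}\subset U$ is a sequence $\{x_n\}_{n\in\mathbb Z}\subset X$ with $x_{n+1}=g(u_n,x_n)$. $g$ is SI-invertible if $g(\cdot,x)$ is injective for each $x$; $g$ has the unique solution property if each input has exactly one solution. $\overleftarrow U$ is the space of left-infinite sequences $(\ldots,u_{-2},u_{-1})$ in $U$ with the product topology; $r(\ldots,u_{-3},u_{-2},u_{-1})=(\ldots,u_{-3},u_{-2})$. Under the unique solution property, $h:\overleftarrow U\to X$ is defined by $h(\ldots,u_{-2},u_{-1})=x_0$ where $\{x_n\}$ is the unique solution for any bi-infinite input extending $(\ldots,u_{-2},u_{-1})$ (this depends only on the left-infinite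 part). The inverse-limit space is $\widehat U_T=\{(\ldots,u_{-2},u_{-1}):Tu_n=u_{n+1}\}$ with $\widehat T(\ldots,u_{-2},u_{-1})=(\ldots,u_{-2},u_{-1},Tu_{-1})$. $Y_T=\{(x_{n-1},x_n):\{x_k\}\text{ a solution of }g\text{ for some orbit of }T,\ n\in\mathbb Z\}$ and $G_T:Y_T\to Y_T$ is the map $(x_{n-1},x_n)\mapsto(x_n,x_{n+1})$ along such solutions. *)

theory Defs
  imports "HOL-Analysis.Analysis"
begin

text \<open>Bi-infinite sequences are functions int => _. Left-infinite sequences
(..., u_{-2}, u_{-1}) are functions s :: nat => _ with s k = u_{-(k+1)}.\<close>

definition is_solution :: "('u \<Rightarrow> 'x \<Rightarrow> 'x) \<Rightarrow> 'x set \<Rightarrow> (int \<Rightarrow> 'u) \<Rightarrow> (int \<Rightarrow> 'x) \<Rightarrow> bool" where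
  "is_solution g X u x \<longleftrightarrow> (\<forall>n. x n \<in> X) \<and> (\<forall>n. x (n + 1) = g (u n) (x n))"

definition SI_invertible :: "('u \<Rightarrow> 'x \<Rightarrow> 'x) \<Rightarrow> 'u set \<Rightarrow> 'x set \<Rightarrow> bool" where
  "SI_invertible g U X \<longleftrightarrow> (\<forall>x\<in>X. inj_on (\<lambda>u. g u x) U)"

definition unique_solution_property :: "('u \<Rightarrow> 'x \<Rightarrow> 'x) \<Rightarrow> 'u set \<Rightarrow> 'x set \<Rightarrow> bool" where
  "unique_solution_property g U X \<longleftrightarrow>
     (\<forall>u. (\<forall>n. u n \<in> U) \<longrightarrow> (\<exists>!x. is_solution g X u x))"

definition is_orbit :: "('u \<Rightarrow> 'u) \<Rightarrow> 'u set \<Rightarrow> (int \<Rightarrow> 'u) \<Rightarrow> bool" where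
  "is_orbit T U u \<longleftrightarrow> (\<forall>n. u n \<in> U) \<and> (\<forall>n. u (n + 1) = T (u n))"

definition hmap :: "('u \<Rightarrow> 'x \<Rightarrow> 'x) \<Rightarrow> 'u set \<Rightarrow> 'x set \<Rightarrow> (nat \<Rightarrow> 'u) \<Rightarrow> 'x" where
  "hmap g U X s = (THE x0. \<exists>u x. (\<forall>n. u n \<in> U) \<and> (\<forall>k. u (- int k - 1) = s k)
                              \<and> is_solution g X u x \<and> x 0 = x0)"

definition rshift :: "(nat \<Rightarrow> 'u) \<Rightarrow> nat \<Rightarrow> 'u" where
  "rshift s = (\<lambda>k. s (Suc k))"

definition inv_limit :: "('u \<Rightarrow> 'u) \<Rightarrow> 'u set \<Rightarrow> (nat \<Rightarrow> 'u) set" where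
  "inv_limit T U = {s. (\<forall>k. s k \<in> U) \<and> (\<forall>k. T (s (Suc k)) = s k)}"

definition hatT :: "('u \<Rightarrow> 'u) \<Rightarrow> (nat \<Rightarrow> 'u) \<Rightarrow> nat \<Rightarrow> 'u" where
  "hatT T s = (\<lambda>k. case k of 0 \<Rightarrow> T (s 0) | Suc j \<Rightarrow> s j)"

definition Y_T :: "('u \<Rightarrow> 'x \<Rightarrow> 'x) \<Rightarrow> ('u \<Rightarrow> 'u) \<Rightarrow> 'u set \<Rightarrow> 'x set \<Rightarrow> ('x \<times> 'x) set" where
  "Y_T g T U X = {(x (n - 1), x n) | u x n. is_orbit T U u \<and> is_solution g X u x}"

definition G_T :: "('u \<Rightarrow> 'x \<Rightarrow> 'x) \<Rightarrow> ('u \<Rightarrow> 'u) \<Rightarrow> 'u set \<Rightarrow> 'x set \<Rightarrow> 'x \<times> 'x \<Rightarrow> 'x \<times> 'x" where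
  "G_T g T U X p = (THE q. \<exists>u x n. is_orbit T U u \<and> is_solution g X u x
                         \<and> p = (x (n - 1), x n) \<and> q = (x n, x (n + 1)))"

definition H2 :: "('u \<Rightarrow> 'x \<Rightarrow> 'x) \<Rightarrow> 'u set \<Rightarrow> 'x set \<Rightarrow> (nat \<Rightarrow> 'u) \<Rightarrow> 'x \<times> 'x" where
  "H2 g U X s = (hmap g U X (rshift s), hmap g U X s)"

definition proj_i :: "'n \<Rightarrow> (real^'n) \<times> (real^'n) \<Rightarrow> real \<times> real" where
  "proj_i i p = (fst p $ i, snd p $ i)"

definition koopman :: "('a \<Rightarrow> 'a) \<Rightarrow> ('a \<Rightarrow> 'b) \<Rightarrow> 'a \<Rightarrow> 'b" where
  "koopman S f = f \<circ> S"

end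

theory Submission
  imports Defs
begin

lemma hmap_eq:
  assumes usp: "unique_solution_property g U X"
    and maps: "\<forall>u\<in>U. \<forall>x\<in>X. g u x \<in> X"
    and uU: "\<forall>n. u n \<in> U" and sol: "is_solution g X u x"
    and ext: "\<forall>k. u (- int k - 1) = s k"
  shows "hmap g U X s = x 0"
  unfolding hmap_def
proof (rule the_equality)
  show "\<exists>u' x'. (\<forall>n. u' n \<in> U) \<and> (\<forall>k. u' (- int k - 1) = s k) \<and> is_solution g X u' x' \<and> x' 0 = x 0"
    using uU sol ext by blast
next
  fix x0 assume "\<exists>u' x'. (\<forall>n. u' n \<in> U) \<and> (\<forall>k. u' (- int k - 1) = s k) \<and> is_solution g X u' x' \<and> x' 0 = x0"
  then obtain u' x' where u'U: "\<forall>n. u' n \<in> U" and ext': "\<forall>k. u' (- int k - 1) = s k"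
    and sol': "is_solution g X u' x'" and x0: "x' 0 = x0" by blast
  have agree: "u' n = u n" if "n < 0" for n
  proof -
    have "n = - int (nat (-n-1)) - 1" using that by simp
    then show ?thesis using ext ext' by metis
  qed
  define F where "F = rec_nat (x 0) (\<lambda>m y. g (u' (int m)) y)"
  have F0: "F 0 = x 0" and FS: "\<And>m. F (Suc m) = g (u' (int m)) (F m)" by (simp_all add: F_def)
  have FX: "F m \<in> X" for m
    by (induction m) (use sol maps u'U in \<open>auto simp: is_solution_def F0 FS\<close>)
  define x'' where "x'' n = (if n \<le> 0 then x n else F (nat n))" for n
  have "is_solution g X u' x''"
    unfolding is_solution_def
  proof (intro conjI allI)
    fix n show "x'' n \<in> X" using sol FX by (auto simp: x''_def is_solution_def)
  next
    fix n :: int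
    show "x'' (n + 1) = g (u' n) (x'' n)"
    proof (cases "n < 0")
      case True
      then show ?thesis using sol agree[OF True] by (auto simp: x''_def is_solution_def)
    next
      case False
      then have "nat (n+1) = Suc (nat n)" by simp
      then show ?thesis using False F0 FS[of "nat n"]
        by (cases "n = 0") (auto simp: x''_def)
    qed
  qed
  moreover have "\<exists>!y. is_solution g X u' y" using usp u'U unfolding unique_solution_property_def by blast
  ultimately have "x'' = x'" using sol' by blast
  then show "x0 = x 0" proof -
    have "x'' 0 = x' 0" using \<open>x'' = x'\<close> by simp
    then show ?thesis using x0 by (simp add: x''_def)
  qed
qed

theorem corollary1:
  fixes U :: "'u::metric_space set"
    and X :: "(real^'n) set"
    and T :: "'u \<Rightarrow> 'u"
    and g :: "'u \<Rightarrow> real^'n \<Rightarrow> real^'n"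
  assumes "compact U"
    and "compact X"
    and TU: "T ` U = U"
    and "continuous_on (U \<times> X) (\<lambda>(u, x). g u x)"
    and maps: "\<forall>u\<in>U. \<forall>x\<in>X. g u x \<in> X"
    and SI: "SI_invertible g U X"
    and usp: "unique_solution_property g U X"
  shows "\<forall>i. \<forall>s\<in>inv_limit T U.
           koopman (hatT T) (proj_i i \<circ> H2 g U X) s
             = (proj_i i \<circ> G_T g T U X \<circ> H2 g U X) s"
proof (intro allI ballI)
  fix i s assume "s \<in> inv_limit T U"
  then have sU: "\<And>k. s k \<in> U" and sT: "\<And>k. T (s (Suc k)) = s k"
    by (auto simp: inv_limit_def)
  have TUi: "y \<in> U \<Longrightarrow> T y \<in> U" for y using TU by blast
  have TnU: "(T ^^ m) y \<in> U" if "y \<in> U" for m y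
    by (induction m) (use that TUi in auto)
  define u where "u n = (if n < 0 then s (nat (-n-1)) else (T ^^ (nat n + 1)) (s 0))" for n
  have uU: "\<forall>n. u n \<in> U" using sU TnU TUi by (auto simp: u_def)
  have uT: "u (n+1) = T (u n)" for n
  proof -
    consider "n < -1" | "n = -1" | "n \<ge> 0" by linarith
    then show ?thesis
    proof cases
      case 1
      then have "nat (-n-1) = Suc (nat (-(n+1)-1))" by simp
      then show ?thesis using 1 sT by (simp add: u_def)
    next
      case 2 then show ?thesis by (simp add: u_def)
    next
      case 3
      then have "nat (n+1) = Suc (nat n)" by simp
      then show ?thesis using 3 by (simp add: u_def)
    qed
  qed
  have orb: "is_orbit T U u" using uU uT by (simp add: is_orbit_def)
  obtain x where sol: "is_solution g X u x" using usp uU unfolding unique_solution_property_def by blast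
  have xX: "\<And>n. x n \<in> X" and xr: "\<And>n. x (n+1) = g (u n) (x n)" using sol by (auto simp: is_solution_def)
  have h0: "hmap g U X s = x 0"
    by (rule hmap_eq[OF usp maps uU sol]) (simp add: u_def)
  have h1: "hmap g U X (hatT T s) = x 1"
  proof -
    have "hmap g U X (hatT T s) = (\<lambda>n. x (n+1)) 0"
    proof (rule hmap_eq[OF usp maps, of "\<lambda>n. u (n+1)"])
      show "\<forall>n. u (n+1) \<in> U" using uU by simp
      show "is_solution g X (\<lambda>n. u (n + 1)) (\<lambda>n. x (n + 1))"
        unfolding is_solution_def
      proof (intro conjI allI)
        fix n :: int show "x (n+1) \<in> X" by (rule xX)
        show "x (n + 1 + 1) = g (u (n + 1)) (x (n + 1))" by (rule xr)
      qed
      show "\<forall>k. u (- int k - 1 + 1) = hatT T s k"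
      proof
        fix k show "u (- int k - 1 + 1) = hatT T s k"
          by (cases k) (auto simp: u_def hatT_def)
      qed
    qed
    then show ?thesis by simp
  qed
  have hm: "hmap g U X (rshift s) = x (-1)"
  proof -
    have "hmap g U X (rshift s) = (\<lambda>n. x (n-1)) 0"
    proof (rule hmap_eq[OF usp maps, of "\<lambda>n. u (n-1)"])
      show "\<forall>n. u (n-1) \<in> U" using uU by simp
      show "is_solution g X (\<lambda>n. u (n - 1)) (\<lambda>n. x (n - 1))"
        unfolding is_solution_def
      proof (intro conjI allI)
        fix n :: int show "x (n-1) \<in> X" by (rule xX)
        have "x (n - 1 + 1) = g (u (n - 1)) (x (n - 1))" by (rule xr)
        then show "x (n + 1 - 1) = g (u (n - 1)) (x (n - 1))" by (simp add: algebra_simps)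
      qed
      show "\<forall>k. u (- int k - 1 - 1) = rshift s k"
      proof
        fix k
        have "nat (-(- int k - 1 - 1) - 1) = Suc k" by simp
        then show "u (- int k - 1 - 1) = rshift s k" by (simp add: u_def rshift_def)
      qed
    qed
    then show ?thesis by simp
  qed
  have rs: "rshift (hatT T s) = s" by (simp add: rshift_def hatT_def)
  have G: "G_T g T U X (x (-1), x 0) = (x 0, x 1)"
    unfolding G_T_def
  proof (rule the_equality)
    show "\<exists>u' x' n. is_orbit T U u' \<and> is_solution g X u' x' \<and> (x (-1), x 0) = (x' (n - 1), x' n) \<and> (x 0, x 1) = (x' n, x' (n + 1))"
      using orb sol by (rule_tac x=u in exI, rule_tac x=x in exI, rule_tac x=0 in exI) simp
  next
    fix q assume "\<exists>u' x' n. is_orbit T U u' \<and> is_solution g X u' x' \<and> (x (-1), x 0) = (x' (n - 1), x' n) \<and> q = (x' n, x' (n + 1))"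
    then obtain u' x' n where orb': "is_orbit T U u'" and sol': "is_solution g X u' x'"
      and e1: "x' (n-1) = x (-1)" and e2: "x' n = x 0" and q: "q = (x' n, x' (n+1))" by auto
    have u'U: "\<And>m. u' m \<in> U" and u'T: "\<And>m. u' (m+1) = T (u' m)" using orb' by (auto simp: is_orbit_def)
    have x'r: "\<And>m. x' (m+1) = g (u' m) (x' m)" using sol' by (auto simp: is_solution_def)
    have "g (u' (n-1)) (x (-1)) = g (u (-1)) (x (-1))"
      using x'r[of "n-1"] xr[of "-1"] e1 e2 by simp
    then have "u' (n-1) = u (-1)"
      using SI xX[of "-1"] u'U uU unfolding SI_invertible_def inj_on_def by blast
    then have "u' n = u 0" using u'T[of "n-1"] uT[of "-1"] by simp
    then show "q = (x 0, x 1)" using q e2 x'r[of n] xr[of 0] by simp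
  qed
  show "koopman (hatT T) (proj_i i \<circ> H2 g U X) s = (proj_i i \<circ> G_T g T U X \<circ> H2 g U X) s"
    by (simp add: koopman_def H2_def rs h0 h1 hm G)
qed

end
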